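(* Let $p\ne q$ be primes and $G=\mathbb{Z}_p^2\times\mathbb{Z}_q^2$. If $A\subseteq G$ and $B$ is a subgroup of $G$ such that $A\oplus B=G$ (i.e. $A+B=G$ and $|A||B|=|G|$), then $A$ is spectral.
   Context: For $w=(u,v)\in G$ ($u\in\mathbb{Z}_p^2$, $v\in\mathbb{Z}_q^2$) define $\chi_w(a,b)=\exp\big(2\pi i(\tfrac{u\cdot a}{p}+\tfrac{v\cdot b}{q})\big)$ and $\chi(A)=\sum_{s\in A}\chi(s)$. $A$ is spectral if there is $\Lambda\subseteq G$ with $|\Lambda|=|A|$ and $\chi_{\lambda-\lambda'}(A)=0$ for all distinct $\lambda,\lambda'\in\Lambda$. *)

theory Defs
  imports "HOL-Analysis.Analysis"
begin

text \<open>The group G = Z_p^2 x Z_q^2, elements represented as quadruples (a1,a2,b1,b2)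
  of natural numbers with a_i < p and b_i < q; addition componentwise mod p resp. mod q.\<close>

type_synonym elt = "nat \<times> nat \<times> nat \<times> nat"

definition grp :: "nat \<Rightarrow> nat \<Rightarrow> elt set" where
  "grp p q = {(a1, a2, b1, b2). a1 < p \<and> a2 < p \<and> b1 < q \<and> b2 < q}"

definition gadd :: "nat \<Rightarrow> nat \<Rightarrow> elt \<Rightarrow> elt \<Rightarrow> elt" where
  "gadd p q x y = (case x of (a1, a2, b1, b2) \<Rightarrow> case y of (c1, c2, d1, d2) \<Rightarrow>
     ((a1 + c1) mod p, (a2 + c2) mod p, (b1 + d1) mod q, (b2 + d2) mod q))"

definition gneg :: "nat \<Rightarrow> nat \<Rightarrow> elt \<Rightarrow> elt" where
  "gneg p q x = (case x of (a1, a2, b1, b2) \<Rightarrow>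
     ((p - a1) mod p, (p - a2) mod p, (q - b1) mod q, (q - b2) mod q))"

definition gsub :: "nat \<Rightarrow> nat \<Rightarrow> elt \<Rightarrow> elt \<Rightarrow> elt" where
  "gsub p q x y = gadd p q x (gneg p q y)"

definition sumset :: "nat \<Rightarrow> nat \<Rightarrow> elt set \<Rightarrow> elt set \<Rightarrow> elt set" where
  "sumset p q A B = {gadd p q a b | a b. a \<in> A \<and> b \<in> B}"

definition is_subgroup :: "nat \<Rightarrow> nat \<Rightarrow> elt set \<Rightarrow> bool" where
  "is_subgroup p q B \<longleftrightarrow> B \<subseteq> grp p q \<and> (0, 0, 0, 0) \<in> B \<and>
     (\<forall>x\<in>B. \<forall>y\<in>B. gadd p q x y \<in> B) \<and> (\<forall>x\<in>B. gneg p q x \<in> B)"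

definition chi :: "nat \<Rightarrow> nat \<Rightarrow> elt \<Rightarrow> elt \<Rightarrow> complex" where
  "chi p q w s = (case w of (u1, u2, v1, v2) \<Rightarrow> case s of (a1, a2, b1, b2) \<Rightarrow>
     cis (2 * pi * (real (u1 * a1 + u2 * a2) / real p + real (v1 * b1 + v2 * b2) / real q)))"

definition chi_set :: "nat \<Rightarrow> nat \<Rightarrow> elt \<Rightarrow> elt set \<Rightarrow> complex" where
  "chi_set p q w A = (\<Sum>s\<in>A. chi p q w s)"

definition spectral :: "nat \<Rightarrow> nat \<Rightarrow> elt set \<Rightarrow> bool" where
  "spectral p q A \<longleftrightarrow> (\<exists>L. L \<subseteq> grp p q \<and> card L = card A \<and>
     (\<forall>l\<in>L. \<forall>m\<in>L. l \<noteq> m \<longrightarrow> chi_set p q (gsub p q l m) A = 0))"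

end

theory Submission
  imports Defs "HOL-Number_Theory.Cong"
begin
definition ee :: "nat \<Rightarrow> nat \<Rightarrow> nat \<Rightarrow> complex" where
  "ee p u a = cis (2 * pi * real (u * a) / real p)"

lemma chi_ee: "chi p q (u1,u2,v1,v2) (a1,a2,b1,b2) = ee p u1 a1 * ee p u2 a2 * ee q v1 b1 * ee q v2 b2"
  unfolding chi_def ee_def by (simp add: cis_mult add_divide_distrib distrib_left algebra_simps)

lemma ee_add: "ee p u (a + c) = ee p u a * ee p u c"
  unfolding ee_def by (simp add: cis_mult add_divide_distrib distrib_left algebra_simps)

lemma ee_sym: "ee p u a = ee p a u"
  unfolding ee_def by (simp add: mult.commute)

lemma ee_mod: assumes "p > 0" shows "ee p u (a mod p) = ee p u a"
proof -
  have "a = a mod p + p * (a div p)" by simp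
  then have "ee p u a = ee p u (a mod p) * ee p u (p * (a div p))" by (metis ee_add)
  moreover have "ee p u (p * (a div p)) = 1"
  proof -
    have "2 * pi * real (u * (p * (a div p))) / real p = 2 * pi * real (u * (a div p))"
      using assms by (simp add: field_simps)
    then show ?thesis unfolding ee_def by (simp del: of_nat_mult)
  qed
  ultimately show ?thesis by simp
qed

lemma ee_0: "ee p u 0 = 1" unfolding ee_def by simp

lemma ee_ne1: assumes "0 < u" "u < p" shows "ee p u 1 \<noteq> 1"
proof
  assume "ee p u 1 = 1"
  then have "cos (2 * pi * real u / real p) = 1" unfolding ee_def
    by (metis complex.sel(1) cis.sel(1) one_complex.sel(1) mult.right_neutral)
  then obtain n :: int where n: "2 * pi * real u / real p = real_of_int n * 2 * pi"
    using cos_one_2pi_int[of "2 * pi * real u / real p"] by blast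
  then have "2 * pi * (real u / real p) = 2 * pi * n" by simp
  then have "real u / real p = n" using pi_neq_zero by (simp only: mult.assoc mult_cancel_left) simp
  moreover have "0 < real u / real p" "real u / real p < 1" using assms by auto
  ultimately have "0 < real_of_int n" "real_of_int n < 1" by auto
  then have "0 < n" "n < 1" by simp_all
  then show False by simp
qed

lemma mod_cancel_aux: fixes t x y p :: nat
  assumes "(t + x) mod p = (t + y) mod p" "x < p" "y < p" shows "x = y"
proof -
  have "[t + x = t + y] (mod p)" using assms(1) by (simp add: cong_def)
  then have "[x = y] (mod p)" by (simp add: cong_add_lcancel_nat)
  then show ?thesis using assms(2,3) by (simp add: cong_def)
qed

lemma gadd_in: "0 < p \<Longrightarrow> 0 < q \<Longrightarrow> gadd p q x y \<in> grp p q"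
  by (cases x; cases y) (simp add: gadd_def grp_def)

lemma gadd_comm: "gadd p q x y = gadd p q y x"
  by (cases x; cases y) (simp add: gadd_def add.commute)

lemma gadd_cancel: assumes "x \<in> grp p q" "y \<in> grp p q" "gadd p q t x = gadd p q t y" shows "x = y"
proof -
  obtain t1 t2 t3 t4 where t: "t = (t1,t2,t3,t4)" by (cases t) auto
  obtain x1 x2 x3 x4 where x: "x = (x1,x2,x3,x4)" by (cases x) auto
  obtain y1 y2 y3 y4 where y: "y = (y1,y2,y3,y4)" by (cases y) auto
  have e: "(t1+x1) mod p = (t1+y1) mod p" "(t2+x2) mod p = (t2+y2) mod p"
    "(t3+x3) mod q = (t3+y3) mod q" "(t4+x4) mod q = (t4+y4) mod q"
    using assms(3) by (simp_all add: t x y gadd_def)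
  have b: "x1 < p" "x2 < p" "x3 < q" "x4 < q" "y1 < p" "y2 < p" "y3 < q" "y4 < q"
    using assms(1,2) by (simp_all add: x y grp_def)
  show ?thesis unfolding x y using mod_cancel_aux[OF e(1) b(1) b(5)] mod_cancel_aux[OF e(2) b(2) b(6)]
    mod_cancel_aux[OF e(3) b(3) b(7)] mod_cancel_aux[OF e(4) b(4) b(8)] by simp
qed

lemma chi_gadd: assumes "0 < p" "0 < q"
  shows "chi p q w (gadd p q x y) = chi p q w x * chi p q w y"
proof -
  obtain t1 t2 t3 t4 where t: "w = (t1,t2,t3,t4)" by (cases w) auto
  obtain x1 x2 x3 x4 where x: "x = (x1,x2,x3,x4)" by (cases x) auto
  obtain y1 y2 y3 y4 where y: "y = (y1,y2,y3,y4)" by (cases y) auto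
  have "chi p q w (gadd p q x y) = ee p t1 ((x1+y1) mod p) * ee p t2 ((x2+y2) mod p) * ee q t3 ((x3+y3) mod q) * ee q t4 ((x4+y4) mod q)"
    by (simp add: t x y gadd_def chi_ee)
  also have "\<dots> = ee p t1 (x1+y1) * ee p t2 (x2+y2) * ee q t3 (x3+y3) * ee q t4 (x4+y4)"
    using assms by (simp only: ee_mod)
  also have "\<dots> = chi p q w x * chi p q w y"
    by (simp add: t x y chi_ee ee_add mult_ac)
  finally show ?thesis .
qed

lemma chi_sym: "chi p q w s = chi p q s w"
  by (cases w; cases s) (simp add: chi_ee ee_sym[of p] ee_sym[of q])

lemma chi_zero: "chi p q w (0,0,0,0) = 1"
  by (cases w) (simp add: chi_ee ee_0)

lemma gneg_in: "0 < p \<Longrightarrow> 0 < q \<Longrightarrow> gneg p q x \<in> grp p q"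
  by (cases x) (simp add: gneg_def grp_def)

lemma neg_aux: "(m::nat) < p \<Longrightarrow> ((p - m) mod p + m) mod p = 0"
  by (cases "m = 0") auto

lemma gadd_gneg: assumes "m \<in> grp p q" shows "gadd p q (gneg p q m) m = (0,0,0,0)"
  using assms by (cases m) (simp add: gadd_def gneg_def grp_def neg_aux)

lemma gsub_zero: assumes "0 < p" "0 < q" "l \<in> grp p q" "m \<in> grp p q" "gsub p q l m = (0,0,0,0)"
  shows "l = m"
proof -
  have "gadd p q (gneg p q m) l = gadd p q (gneg p q m) m"
    using assms gadd_gneg[OF assms(4)] by (simp add: gsub_def gadd_comm)
  then show ?thesis using gadd_cancel assms by blast
qed

lemma sum_shift: assumes "0 < p" "0 < q" "t \<in> grp p q"
  shows "(\<Sum>s\<in>grp p q. f s) = (\<Sum>s\<in>grp p q. f (gadd p q t s))"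
proof -
  have inj: "inj_on (gadd p q t) (grp p q)" using gadd_cancel by (meson inj_onI)
  have fin: "finite (grp p q)"
  proof -
    have "grp p q \<subseteq> {..<p} \<times> {..<p} \<times> {..<q} \<times> {..<q}" by (auto simp: grp_def)
    then show ?thesis by (rule finite_subset) auto
  qed
  have sub: "gadd p q t ` grp p q \<subseteq> grp p q" using gadd_in assms by blast
  have "gadd p q t ` grp p q = grp p q"
    using card_subset_eq[OF fin sub] card_image[OF inj] by simp
  then have "(\<Sum>s\<in>grp p q. f s) = (\<Sum>s\<in>gadd p q t ` grp p q. f s)" by simp
  also have "\<dots> = (\<Sum>s\<in>grp p q. f (gadd p q t s))" by (rule sum.reindex_cong[OF inj refl refl])
  finally show ?thesis .
qed

lemma fin_grp: "finite (grp p q)"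
proof -
  have "grp p q \<subseteq> {..<p} \<times> {..<p} \<times> {..<q} \<times> {..<q}" by (auto simp: grp_def)
  then show ?thesis by (rule finite_subset) auto
qed

lemma exists_ne1: assumes "w \<in> grp p q" "w \<noteq> (0,0,0,0)"
  shows "\<exists>t\<in>grp p q. chi p q w t \<noteq> 1"
proof -
  obtain u1 u2 v1 v2 where w: "w = (u1,u2,v1,v2)" by (cases w) auto
  have b: "u1 < p" "u2 < p" "v1 < q" "v2 < q" using assms(1) w by (auto simp: grp_def)
  consider "0 < u1" | "0 < u2" | "0 < v1" | "0 < v2" using assms(2) w by auto
  then show ?thesis
  proof cases
    case 1 then show ?thesis using b ee_ne1[of u1 p]
      by (intro bexI[of _ "(1,0,0,0)"]) (auto simp: w chi_ee ee_0 grp_def)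
  next
    case 2 then show ?thesis using b ee_ne1[of u2 p]
      by (intro bexI[of _ "(0,1,0,0)"]) (auto simp: w chi_ee ee_0 grp_def)
  next
    case 3 then show ?thesis using b ee_ne1[of v1 q]
      by (intro bexI[of _ "(0,0,1,0)"]) (auto simp: w chi_ee ee_0 grp_def)
  next
    case 4 then show ?thesis using b ee_ne1[of v2 q]
      by (intro bexI[of _ "(0,0,0,1)"]) (auto simp: w chi_ee ee_0 grp_def)
  qed
qed

lemma orth: assumes "0 < p" "0 < q" "w \<in> grp p q" "w \<noteq> (0,0,0,0)"
  shows "(\<Sum>s\<in>grp p q. chi p q w s) = 0"
proof -
  obtain t where t: "t \<in> grp p q" "chi p q w t \<noteq> 1" using exists_ne1 assms by blast
  have "(\<Sum>s\<in>grp p q. chi p q w s) = (\<Sum>s\<in>grp p q. chi p q w (gadd p q t s))"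
    by (rule sum_shift[OF assms(1,2) t(1)])
  also have "\<dots> = chi p q w t * (\<Sum>s\<in>grp p q. chi p q w s)"
    by (simp add: chi_gadd[OF assms(1,2)] sum_distrib_left)
  finally show ?thesis using t(2)
    by (metis mult_cancel_right2)
qed

lemma setcomp_image: "{f a b | a b. a \<in> A \<and> b \<in> B} = (\<lambda>(a, b). f a b) ` (A \<times> B)"
  by auto

theorem corollary5p2:
  fixes p q :: nat and A B :: "elt set"
  assumes "prime p" and "prime q" and "p \<noteq> q"
    and "A \<subseteq> grp p q"
    and "is_subgroup p q B"
    and "sumset p q A B = grp p q"
    and "card A * card B = card (grp p q)"
  shows "spectral p q A"
proof -
  define G where "G = grp p q"
  have p0: "0 < p" using assms(1) prime_gt_0_nat by blast
  have q0: "0 < q" using assms(2) prime_gt_0_nat by blast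
  have finG: "finite G" using fin_grp G_def by simp
  have BG: "B \<subseteq> G" and B0: "(0,0,0,0) \<in> B" and Badd: "\<And>x y. x \<in> B \<Longrightarrow> y \<in> B \<Longrightarrow> gadd p q x y \<in> B"
    using assms(5) unfolding is_subgroup_def G_def by auto
  have finB: "finite B" using finite_subset[OF BG finG] .
  have cB: "card B > 0" using finB B0 card_gt_0_iff by blast
  have finA: "finite A" using finite_subset[OF assms(4)[folded G_def] finG] .
  define Bp where "Bp = {w \<in> G. \<forall>b\<in>B. chi p q w b = 1}"
  have BpG: "Bp \<subseteq> G" unfolding Bp_def by auto
  have chiB: "chi_set p q w B = (if w \<in> Bp then of_nat (card B) else 0)" if w: "w \<in> G" for w
  proof (cases "w \<in> Bp")
    case True
    then show ?thesis unfolding chi_set_def Bp_def by simp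
  next
    case False
    then obtain b0 where b0: "b0 \<in> B" "chi p q w b0 \<noteq> 1" using w unfolding Bp_def by auto
    have inj: "inj_on (gadd p q b0) B" using gadd_cancel BG unfolding G_def by (meson inj_onI subsetD)
    have sub: "gadd p q b0 ` B \<subseteq> B" using Badd b0 by blast
    have img: "gadd p q b0 ` B = B"
      using card_subset_eq[OF finB sub] card_image[OF inj] by simp
    have "chi_set p q w B = (\<Sum>b\<in>gadd p q b0 ` B. chi p q w b)" unfolding chi_set_def img ..
    also have "\<dots> = (\<Sum>b\<in>B. chi p q w (gadd p q b0 b))" by (rule sum.reindex_cong[OF inj refl refl])
    also have "\<dots> = chi p q w b0 * chi_set p q w B"
      by (simp add: chi_gadd[OF p0 q0] sum_distrib_left chi_set_def)
    finally have "chi_set p q w B = 0" using b0(2) by (metis mult_cancel_right2)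
    then show ?thesis using False by simp
  qed
  have inner: "(\<Sum>w\<in>G. chi p q w b) = (if b = (0,0,0,0) then of_nat (card G) else 0)" if b: "b \<in> G" for b
  proof (cases "b = (0,0,0,0)")
    case True
    then show ?thesis by (simp add: chi_zero)
  next
    case False
    have "(\<Sum>w\<in>G. chi p q w b) = (\<Sum>w\<in>G. chi p q b w)" by (simp add: chi_sym[of p q _ b])
    also have "\<dots> = 0" using orth[OF p0 q0 b[unfolded G_def] False] G_def by simp
    finally show ?thesis using False by simp
  qed
  have "(\<Sum>w\<in>G. chi_set p q w B) = (\<Sum>b\<in>B. \<Sum>w\<in>G. chi p q w b)"
    unfolding chi_set_def by (rule sum.swap)
  also have "\<dots> = (\<Sum>b\<in>B. if b = (0,0,0,0) then of_nat (card G) else 0)"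
    using inner BG by (intro sum.cong refl) blast
  also have "\<dots> = of_nat (card G)" using finB B0 by simp
  finally have s1: "(\<Sum>w\<in>G. chi_set p q w B) = of_nat (card G)" .
  have "(\<Sum>w\<in>G. chi_set p q w B) = (\<Sum>w\<in>G. if w \<in> Bp then of_nat (card B) else 0)"
    using chiB by (intro sum.cong) auto
  also have "\<dots> = of_nat (card (G \<inter> Bp) * card B)"
    using finG by (simp add: sum.If_cases)
  also have "G \<inter> Bp = Bp" using BpG by auto
  finally have "of_nat (card Bp * card B) = (of_nat (card G) :: complex)" using s1 by simp
  then have "card Bp * card B = card G" by (simp only: of_nat_eq_iff)
  then have "card Bp * card B = card A * card B" using assms(7) unfolding G_def by simp
  then have cBp: "card Bp = card A" using cB by simp
  let ?f = "\<lambda>(a, b). gadd p q a b"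
  have "sumset p q A B = ?f ` (A \<times> B)" unfolding sumset_def by (rule setcomp_image)
  then have imgAB: "?f ` (A \<times> B) = G" using assms(6) unfolding G_def by simp
  have injAB: "inj_on ?f (A \<times> B)"
  proof (rule eq_card_imp_inj_on)
    show "finite (A \<times> B)" using finA finB by simp
    show "card (?f ` (A \<times> B)) = card (A \<times> B)" using imgAB assms(7) G_def by (simp add: card_cartesian_product)
  qed
  have annA: "chi_set p q w A = 0" if w: "w \<in> Bp" "w \<noteq> (0,0,0,0)" for w
  proof -
    have wG: "w \<in> G" using w BpG by auto
    have "0 = (\<Sum>g\<in>G. chi p q w g)" using orth[OF p0 q0 _ w(2)] wG G_def by simp
    also have "\<dots> = (\<Sum>x\<in>A \<times> B. chi p q w (?f x))"
      unfolding imgAB[symmetric] by (rule sum.reindex_cong[OF injAB refl refl])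
    also have "\<dots> = (\<Sum>(a,b)\<in>A \<times> B. chi p q w (gadd p q a b))" by (simp only: case_prod_unfold)
    also have "\<dots> = (\<Sum>a\<in>A. \<Sum>b\<in>B. chi p q w (gadd p q a b))" by (rule sum.cartesian_product[symmetric])
    also have "\<dots> = (\<Sum>a\<in>A. \<Sum>b\<in>B. chi p q w a)"
      using w(1) unfolding Bp_def by (intro sum.cong refl) (simp add: chi_gadd[OF p0 q0])
    also have "\<dots> = of_nat (card B) * chi_set p q w A" by (simp add: chi_set_def sum_distrib_left)
    finally show ?thesis using cB by simp
  qed
  show ?thesis unfolding spectral_def
  proof (intro exI[of _ Bp] conjI ballI impI)
    show "Bp \<subseteq> grp p q" using BpG G_def by simp
    show "card Bp = card A" by (rule cBp)
    fix l m assume l: "l \<in> Bp" and m: "m \<in> Bp" and lm: "l \<noteq> m"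
    have lG: "l \<in> G" and mG: "m \<in> G" using l m BpG by auto
    define w where "w = gsub p q l m"
    have wG: "w \<in> G" unfolding w_def gsub_def G_def using gadd_in p0 q0 by blast
    have wnz: "w \<noteq> (0,0,0,0)"
    proof
      assume "w = (0,0,0,0)"
      then have "gsub p q l m = (0,0,0,0)" using w_def by simp
      then have "l = m" using gsub_zero[OF p0 q0 lG[unfolded G_def] mG[unfolded G_def]] by blast
      with lm show False by simp
    qed
    have "chi p q w b = 1" if b: "b \<in> B" for b
    proof -
      have bl: "chi p q b l = 1" using l b chi_sym[of p q b l] unfolding Bp_def by simp
      have bm: "chi p q b m = 1" using m b chi_sym[of p q b m] unfolding Bp_def by simp
      have "chi p q b (gneg p q m) * chi p q b m = 1"
        using chi_gadd[OF p0 q0, of b "gneg p q m" m, symmetric] gadd_gneg[OF mG[unfolded G_def]] chi_zero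
        by simp
      then have bn: "chi p q b (gneg p q m) = 1" using bm by simp
      have "chi p q w b = chi p q b w" by (rule chi_sym)
      also have "\<dots> = chi p q b l * chi p q b (gneg p q m)" unfolding w_def gsub_def by (rule chi_gadd[OF p0 q0])
      finally show ?thesis using bl bn by simp
    qed
    then have "w \<in> Bp" using wG unfolding Bp_def by blast
    then show "chi_set p q (gsub p q l m) A = 0" using annA wnz w_def by blast
  qed
qed

end
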